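(* Let $X$ be a topological space, $(Z,d)$ a metric space, $f_n:X\to Z$ ($n\in\mathbb N$) quasicontinuous mappings and $f:X\to Z$ a mapping such that for each $x\in X$, $f(x)$ is a cluster point of $(f_n(x))_{n\in\mathbb N}$. Then for each $n\in\mathbb N$ the set-valued mapping $X\ni x\mapsto\{f_m(x):m\ge n\}\cup\{f(x)\}\in 2^Z$ is lower quasicontinuous.
   Context: $2^Z$ is the set of nonempty subsets of $Z$. A mapping $g:X\to Z$ is quasicontinuous if for each $a\in X$, each neighborhood $U$ of $a$ and each neighborhood $W$ of $g(a)$ there is an open $O$ with $\emptyset\ne O\subset U$ and $g(O)\subset W$. A set-valued $F:X\to 2^Z$ is lower quasicontinuous if for each $x_0\in X$, each neighborhood $U$ of $x_0$ and each open $W\subset Z$ with $F(x_0)\cap W\ne\emptyset$, there is an open $O$ with $\emptyset\ne O\subset U$ and $F(x)\cap W\ne\emptyset$ for all $x\in O$. *)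

theory Defs
  imports "HOL-Analysis.Analysis"
begin

definition nhd :: "'a::topological_space set \<Rightarrow> 'a \<Rightarrow> bool" where
  "nhd U a \<longleftrightarrow> (\<exists>V. open V \<and> a \<in> V \<and> V \<subseteq> U)"

definition quasicontinuous :: "('a::topological_space \<Rightarrow> 'b::topological_space) \<Rightarrow> bool" where
  "quasicontinuous g \<longleftrightarrow>
     (\<forall>a U W. nhd U a \<longrightarrow> nhd W (g a) \<longrightarrow>
        (\<exists>G. open G \<and> G \<noteq> {} \<and> G \<subseteq> U \<and> g ` G \<subseteq> W))"

definition lower_quasicontinuous :: "('a::topological_space \<Rightarrow> 'b::topological_space set) \<Rightarrow> bool" where
  "lower_quasicontinuous F \<longleftrightarrow>
     (\<forall>x0 U W. nhd U x0 \<longrightarrow> open W \<longrightarrow> F x0 \<inter> W \<noteq> {} \<longrightarrow>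
        (\<exists>G. open G \<and> G \<noteq> {} \<and> G \<subseteq> U \<and> (\<forall>x\<in>G. F x \<inter> W \<noteq> {})))"

definition cluster_point_seq :: "'b::topological_space \<Rightarrow> (nat \<Rightarrow> 'b) \<Rightarrow> bool" where
  "cluster_point_seq z s \<longleftrightarrow> (\<forall>W. nhd W z \<longrightarrow> infinite {m. s m \<in> W})"

end

theory Submission
  imports Defs
begin

theorem mainTheorem17:
  fixes fs :: "nat \<Rightarrow> 'a::topological_space \<Rightarrow> 'b::metric_space"
    and f :: "'a \<Rightarrow> 'b"
  assumes "\<And>n. quasicontinuous (fs n)"
    and "\<And>x. cluster_point_seq (f x) (\<lambda>m. fs m x)"
  shows "\<forall>n. lower_quasicontinuous (\<lambda>x. {fs m x | m. m \<ge> n} \<union> {f x})"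
  unfolding lower_quasicontinuous_def
proof (intro allI impI)
  fix n x0 U W
  assume U: "nhd U x0" and W: "open W"
    and ne: "({fs m x0 | m. m \<ge> n} \<union> {f x0}) \<inter> W \<noteq> {}"
  have "\<exists>m\<ge>n. fs m x0 \<in> W"
  proof (cases "f x0 \<in> W")
    case True
    hence "nhd W (f x0)" using W unfolding nhd_def by blast
    hence inf: "infinite {m. fs m x0 \<in> W}" using assms(2)[of x0] unfolding cluster_point_seq_def by simp
    show ?thesis
    proof (rule ccontr)
      assume "\<not> ?thesis"
      hence "{m. fs m x0 \<in> W} \<subseteq> {..<n}" by (auto simp: not_le)
      hence "finite {m. fs m x0 \<in> W}" by (rule finite_subset) simp
      thus False using inf by simp
    qed
  next
    case False
    then obtain y where "y \<in> {fs m x0 | m. m \<ge> n}" "y \<in> W" using ne by auto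
    thus ?thesis by auto
  qed
  then obtain m where m: "m \<ge> n" "fs m x0 \<in> W" by blast
  have "nhd W (fs m x0)" using W m unfolding nhd_def by blast
  then obtain G where G: "open G" "G \<noteq> {}" "G \<subseteq> U" "fs m ` G \<subseteq> W"
    using assms(1)[of m, unfolded quasicontinuous_def, rule_format, OF U] by blast
  show "\<exists>G. open G \<and> G \<noteq> {} \<and> G \<subseteq> U \<and>
          (\<forall>x\<in>G. ({fs m x | m. m \<ge> n} \<union> {f x}) \<inter> W \<noteq> {})"
  proof (intro exI conjI ballI)
    fix x assume "x \<in> G"
    hence "fs m x \<in> W" using G(4) by blast
    moreover have "fs m x \<in> {fs m x | m. m \<ge> n} \<union> {f x}" using m(1) by blast
    ultimately show "({fs m x | m. m \<ge> n} \<union> {f x}) \<inter> W \<noteq> {}" by blast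
  qed (use G in auto)
qed

end
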